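(* Let $\mathcal{A} = \{\boldsymbol{a}_k\} \subset \mathbb{C}^n$ be an atomic set such that any $r \le n$ distinct atoms of $\mathcal{A}$ are linearly independent, and let $\boldsymbol{x} \in \mathbb{C}^n$. For a parameter $\boldsymbol{\theta} = \{\boldsymbol{a}_j, d_j : j = 1,\dots,r\}$ with $r$ a positive integer, $\boldsymbol{a}_j \in \mathcal{A}$ and $d_j > 0$, and for $\beta > 0$, define $$\mathcal{L}(\boldsymbol{\theta}, \beta) = \frac{1}{2}\sum_{j=1}^{r} d_j + \frac{1}{2}\, \boldsymbol{x}^H \Big(\sum_{j=1}^{r} d_j\, \boldsymbol{a}_j \boldsymbol{a}_j^H + \beta \boldsymbol{I}\Big)^{-1} \boldsymbol{x}.$$ Then $$\|\boldsymbol{x}\|_{\mathcal{A}} = \inf_{\boldsymbol{\theta}} \lim_{\beta \to 0^+} \mathcal{L}(\boldsymbol{\theta}, \beta) = \lim_{\beta \to 0^+} \inf_{\boldsymbol{\theta}} \mathcal{L}(\boldsymbol{\theta}, \beta),$$ where the infima range over all such $\boldsymbol{\theta}$ (including all $r$), and limits may take the value $+\infty$.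
   Context: For an atomic set $\mathcal{A} \subset \mathbb{C}^n$, the atomic norm of $\boldsymbol{x} \in \mathbb{C}^n$ is $\|\boldsymbol{x}\|_{\mathcal{A}} = \inf\{ \sum_{k=1}^{r} |s_k| : r \in \mathbb{N},\ s_k \in \mathbb{C},\ \boldsymbol{a}_k \in \mathcal{A},\ \boldsymbol{x} = \sum_{k=1}^{r} s_k \boldsymbol{a}_k \}$. $\boldsymbol{I}$ is the $n\times n$ identity and $^H$ denotes conjugate transpose. *)

theory Defs
  imports "HOL-Analysis.Analysis"
begin

text \<open>Vectors in C^n are complex ^ 'n with n = CARD('n); complex-linear
  independence is vec.independent (scalar multiplication (*s)).\<close>

definition cmat_adj_outer :: "complex^'n \<Rightarrow> complex^'n^'n" where
  "cmat_adj_outer a = (\<chi> i k. a $ i * cnj (a $ k))"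

definition quad_form :: "complex^'n \<Rightarrow> complex^'n^'n \<Rightarrow> complex" where
  "quad_form x M = (\<Sum>i\<in>UNIV. cnj (x $ i) * (M *v x) $ i)"

text \<open>Atomic norm (value +infinity when no decomposition exists).\<close>
definition atomic_norm :: "(complex^'n) set \<Rightarrow> complex^'n \<Rightarrow> ereal" where
  "atomic_norm A x =
     (INF p \<in> {(r::nat, s::nat\<Rightarrow>complex, a::nat\<Rightarrow>complex^'n). r \<ge> 1 \<and> (\<forall>k<r. a k \<in> A) \<and>
                  x = (\<Sum>k<r. s k *s a k)}.
        ereal (\<Sum>k<fst p. cmod (fst (snd p) k)))"

definition params :: "(complex^'n) set \<Rightarrow> (nat \<times> (nat \<Rightarrow> complex^'n) \<times> (nat \<Rightarrow> real)) set" where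
  "params A = {(r, a, d). r \<ge> 1 \<and> (\<forall>j<r. a j \<in> A \<and> d j > 0)}"

definition Lfun :: "complex^'n \<Rightarrow> nat \<times> (nat \<Rightarrow> complex^'n) \<times> (nat \<Rightarrow> real) \<Rightarrow> real \<Rightarrow> real" where
  "Lfun x \<theta> \<beta> = (case \<theta> of (r, a, d) \<Rightarrow>
     (1/2) * (\<Sum>j<r. d j) +
     (1/2) * Re (quad_form x (matrix_inv
        ((\<Sum>j<r. d j *\<^sub>R cmat_adj_outer (a j)) + \<beta> *\<^sub>R mat 1))))"

end

theory Submission
  imports Defs
begin

definition ip :: "complex^'n \<Rightarrow> complex^'n \<Rightarrow> complex" where
  "ip u v = (\<Sum>i\<in>UNIV. cnj (u$i) * v$i)"

lemma ip_add_left: "ip (u + w) v = ip u v + ip w v"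
  by (simp add: ip_def algebra_simps sum.distrib)
lemma ip_add_right: "ip u (v + w) = ip u v + ip u w"
  by (simp add: ip_def algebra_simps sum.distrib)
lemma ip_diff_right: "ip u (v - w) = ip u v - ip u w"
  by (simp add: ip_def algebra_simps sum_subtractf)
lemma ip_scale_left: "ip (c *s u) v = cnj c * ip u v"
  by (simp add: ip_def sum_distrib_left algebra_simps)
lemma ip_scale_right: "ip u (c *s v) = c * ip u v"
  by (simp add: ip_def sum_distrib_left algebra_simps)
lemma ip_zero_left[simp]: "ip 0 v = 0" by (simp add: ip_def)
lemma ip_zero_right[simp]: "ip u 0 = 0" by (simp add: ip_def)
lemma ip_sum_left: "ip (\<Sum>j\<in>J. f j) v = (\<Sum>j\<in>J. ip (f j) v)"
  by (induction J rule: infinite_finite_induct) (auto simp: ip_add_left)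
lemma ip_sum_right: "ip u (\<Sum>j\<in>J. f j) = (\<Sum>j\<in>J. ip u (f j))"
  by (induction J rule: infinite_finite_induct) (auto simp: ip_add_right)
lemma ip_cnj: "cnj (ip u v) = ip v u"
  by (simp add: ip_def mult.commute)
lemma Re_ip: "Re (ip u v) = inner u v"
  by (simp add: ip_def inner_vec_def inner_complex_def)
lemma Im_ip_self: "Im (ip u u) = 0"
  by (simp add: ip_def)
lemma ip_self: "ip u u = of_real ((norm u)^2)"
  by (metis Im_ip_self Re_ip complex_eq_iff dot_square_norm Im_complex_of_real Re_complex_of_real)

lemma outer_mult: "cmat_adj_outer a *v y = ip a y *s a"
  by (simp add: vec_eq_iff matrix_vector_mult_def cmat_adj_outer_def ip_def sum_distrib_left algebra_simps)

lemma smv: "((k::real) *\<^sub>R A) *v v = (of_real k :: complex) *s (A *v (v::complex^'n))"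
  by (simp add: vec_eq_iff matrix_vector_mult_def sum_distrib_left mult.assoc, simp add: scaleR_conv_of_real)

lemma Mmult:
  fixes a :: "nat \<Rightarrow> complex^'n"
  shows "((\<Sum>j<r. d j *\<^sub>R cmat_adj_outer (a j)) + \<beta> *\<^sub>R mat 1) *v y
     = (\<Sum>j<r. (of_real (d j) * ip (a j) y) *s a j) + of_real \<beta> *s y"
proof -
  have 1: "(\<Sum>j\<in>J. d j *\<^sub>R cmat_adj_outer (a j)) *v y = (\<Sum>j\<in>J. (of_real (d j) * ip (a j) y) *s a j)" for J
    by (induction J rule: infinite_finite_induct)
       (auto simp: matrix_vector_mult_add_rdistrib smv outer_mult)
  have 2: "(\<beta> *\<^sub>R mat 1) *v y = of_real \<beta> *s (y::complex^'n)"
    by (simp add: smv)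
  show ?thesis by (simp add: matrix_vector_mult_add_rdistrib 1 2)
qed

lemma quad_expr:
  "ip y ((\<Sum>j<r. (of_real (d j) * ip (a j) y) *s a j) + of_real \<beta> *s y)
    = of_real ((\<Sum>j<r. d j * (cmod (ip (a j) y))^2) + \<beta> * (norm y)^2)"
proof -
  have "ip (a j) y * ip y (a j) = of_real ((cmod (ip (a j) y))^2)" for j
    by (metis complex_norm_square ip_cnj)
  then show ?thesis
    by (simp add: ip_add_right ip_sum_right ip_scale_right ip_self mult.assoc del: of_real_power)
qed

lemma M_inv:
  fixes a :: "nat \<Rightarrow> complex^'n"
  assumes d: "\<forall>j<r. d j > 0" and b: "\<beta> > 0"
  defines "M \<equiv> (\<Sum>j<r. d j *\<^sub>R cmat_adj_outer (a j)) + \<beta> *\<^sub>R mat 1"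
  shows "M *v (matrix_inv M *v x) = x"
proof -
  have inj: "y = 0" if "M *v y = 0" for y
  proof -
    have "ip y (M *v y) = 0" using that by simp
    then have "complex_of_real ((\<Sum>j<r. d j * (cmod (ip (a j) y))^2) + \<beta> * (norm y)^2) = 0"
      unfolding M_def Mmult quad_expr .
    then have "((\<Sum>j<r. d j * (cmod (ip (a j) y))^2) + \<beta> * (norm y)^2) = 0"
      by (simp only: of_real_eq_0_iff)
    moreover have "(\<Sum>j<r. d j * (cmod (ip (a j) y))^2) \<ge> 0"
      using d by (intro sum_nonneg) auto
    ultimately have "\<beta> * (norm y)^2 \<le> 0" by (simp add: sum.distrib)
    with b have "norm y = 0"
      by (metis mult_pos_pos not_le power2_less_0 zero_less_power2 norm_eq_zero)
    then show ?thesis by simp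
  qed
  have "\<exists>B. B ** M = mat 1"
    using matrix_left_invertible_ker inj by blast
  then have "invertible M" using invertible_left_inverse by blast
  then have "\<exists>A'. M ** A' = mat 1 \<and> A' ** M = mat 1" unfolding invertible_def .
  then have "M ** matrix_inv M = mat 1 \<and> matrix_inv M ** M = mat 1"
    unfolding matrix_inv_def by (rule someI_ex)
  then show ?thesis by (simp add: matrix_vector_mul_assoc)
qed

lemma key:
  fixes a :: "nat \<Rightarrow> complex^'n"
  assumes d: "\<forall>j<r. d j > 0" and b: "\<beta> > 0"
  shows "\<exists>y. x = (\<Sum>j<r. (of_real (d j) * ip (a j) y) *s a j) + of_real \<beta> *s y \<and>
     Lfun x (r, a, d) \<beta> = (1/2) * (\<Sum>j<r. d j) +
        (1/2) * ((\<Sum>j<r. d j * (cmod (ip (a j) y))^2) + \<beta> * (norm y)^2)"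
proof -
  define M where "M = (\<Sum>j<r. d j *\<^sub>R cmat_adj_outer (a j)) + \<beta> *\<^sub>R mat 1"
  define y where "y = matrix_inv M *v x"
  have x: "x = (\<Sum>j<r. (of_real (d j) * ip (a j) y) *s a j) + of_real \<beta> *s y"
    using M_inv[OF d b, of a x] unfolding y_def M_def Mmult by simp
  have q: "quad_form x (matrix_inv M) = ip x y"
    by (simp add: quad_form_def ip_def y_def)
  have "ip x y = cnj (ip y x)" by (simp add: ip_cnj)
  also have "ip y x = of_real ((\<Sum>j<r. d j * (cmod (ip (a j) y))^2) + \<beta> * (norm y)^2)"
    by (subst x) (rule quad_expr)
  finally have "ip x y = of_real ((\<Sum>j<r. d j * (cmod (ip (a j) y))^2) + \<beta> * (norm y)^2)"
    by simp
  then show ?thesis using x q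
    by (intro exI[of _ y]) (simp add: Lfun_def M_def)
qed

lemma ofreal_smult: "(complex_of_real b) *s (y::complex^'n) = b *\<^sub>R y"
  by (simp add: vec_eq_iff, simp add: scaleR_conv_of_real)

lemma amgm: "(d::real) > 0 \<Longrightarrow> 2*u*t \<le> u^2/d + d*t^2"
proof -
  assume d: "d > 0"
  have "0 \<le> (u - d*t)^2/d" using d by simp
  also have "(u - d*t)^2/d = u^2/d + d*t^2 - 2*u*t" using d
    by (simp add: field_simps power2_eq_square)
  finally show ?thesis by simp
qed

lemma F1:
  fixes a :: "nat \<Rightarrow> complex^'n"
  assumes d: "\<forall>j<r. d j > 0" and b: "\<beta> > 0"
    and hy: "x = (\<Sum>j<r. (of_real (d j) * ip (a j) y) *s a j) + of_real \<beta> *s y"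
    and hw: "x = (\<Sum>j<r. w j *s a j) + e"
  shows "(\<Sum>j<r. d j * (cmod (ip (a j) y))^2) + \<beta> * (norm y)^2
     \<le> (\<Sum>j<r. (cmod (w j))^2 / d j) + (norm e)^2 / \<beta>"
proof -
  define Q where "Q = (\<Sum>j<r. d j * (cmod (ip (a j) y))^2) + \<beta> * (norm y)^2"
  have "ip x y = cnj (ip y x)" by (simp add: ip_cnj)
  also have "ip y x = of_real Q" unfolding Q_def by (subst hy) (rule quad_expr)
  finally have Q1: "Re (ip x y) = Q" by simp
  have "ip x y = (\<Sum>j<r. cnj (w j) * ip (a j) y) + ip e y"
    by (subst hw) (simp add: ip_add_left ip_sum_left ip_scale_left)
  then have "Re (ip x y) = (\<Sum>j<r. Re (cnj (w j) * ip (a j) y)) + inner e y"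
    by (simp add: Re_ip)
  also have "\<dots> \<le> (\<Sum>j<r. cmod (w j) * cmod (ip (a j) y)) + norm e * norm y"
  proof (rule add_mono)
    show "(\<Sum>j<r. Re (cnj (w j) * ip (a j) y)) \<le> (\<Sum>j<r. cmod (w j) * cmod (ip (a j) y))"
      by (rule sum_mono) (metis complex_Re_le_cmod complex_mod_cnj norm_mult)
    show "inner e y \<le> norm e * norm y" by (rule norm_cauchy_schwarz)
  qed
  finally have Q2: "Q \<le> (\<Sum>j<r. cmod (w j) * cmod (ip (a j) y)) + norm e * norm y" using Q1 by simp
  have "2 * (\<Sum>j<r. cmod (w j) * cmod (ip (a j) y)) \<le> (\<Sum>j<r. (cmod (w j))^2 / d j + d j * (cmod (ip (a j) y))^2)"
    unfolding sum_distrib_left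
    by (rule sum_mono) (use d amgm in \<open>auto simp: mult.assoc\<close>)
  moreover have "2 * (norm e * norm y) \<le> (norm e)^2/\<beta> + \<beta> * (norm y)^2"
    using amgm[OF b] by (simp add: mult.assoc)
  ultimately have "2 * Q \<le> (\<Sum>j<r. (cmod (w j))^2 / d j) + (norm e)^2 / \<beta> + Q"
    using Q2 unfolding Q_def by (simp add: sum.distrib)
  then show ?thesis unfolding Q_def by simp
qed

lemma Lmono:
  fixes a :: "nat \<Rightarrow> complex^'n"
  assumes d: "\<forall>j<r. d j > 0" and b: "0 < \<beta>1" "\<beta>1 \<le> \<beta>2"
  shows "Lfun x (r, a, d) \<beta>2 \<le> Lfun x (r, a, d) \<beta>1"
proof -
  obtain y1 where y1: "x = (\<Sum>j<r. (of_real (d j) * ip (a j) y1) *s a j) + of_real \<beta>1 *s y1"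
    "Lfun x (r, a, d) \<beta>1 = (1/2) * (\<Sum>j<r. d j) +
        (1/2) * ((\<Sum>j<r. d j * (cmod (ip (a j) y1))^2) + \<beta>1 * (norm y1)^2)"
    using key[OF d b(1)] by blast
  have b2: "\<beta>2 > 0" using b by simp
  obtain y2 where y2: "x = (\<Sum>j<r. (of_real (d j) * ip (a j) y2) *s a j) + of_real \<beta>2 *s y2"
    "Lfun x (r, a, d) \<beta>2 = (1/2) * (\<Sum>j<r. d j) +
        (1/2) * ((\<Sum>j<r. d j * (cmod (ip (a j) y2))^2) + \<beta>2 * (norm y2)^2)"
    using key[OF d b2] by blast
  have "(\<Sum>j<r. d j * (cmod (ip (a j) y2))^2) + \<beta>2 * (norm y2)^2
     \<le> (\<Sum>j<r. (cmod (of_real (d j) * ip (a j) y1))^2 / d j) + (norm (of_real \<beta>1 *s y1))^2 / \<beta>2"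
    by (rule F1[OF d b2 y2(1) y1(1)])
  also have "(\<Sum>j<r. (cmod (of_real (d j) * ip (a j) y1))^2 / d j) = (\<Sum>j<r. d j * (cmod (ip (a j) y1))^2)"
    using d by (intro sum.cong) (auto simp: norm_mult power2_eq_square)
  also have "(norm (of_real \<beta>1 *s y1))^2 / \<beta>2 = \<beta>1 * (\<beta>1 / \<beta>2) * (norm y1)^2"
    using b by (simp add: ofreal_smult power2_eq_square)
  also have "\<dots> \<le> \<beta>1 * (norm y1)^2"
    using b by (intro mult_right_mono) (auto simp: mult_le_cancel_left1 field_simps)
  finally show ?thesis using y1(2) y2(2) by simp
qed

lemma Llower:
  fixes a :: "nat \<Rightarrow> complex^'n"
  assumes d: "\<forall>j<r. d j > 0" and b: "\<beta> > 0"
  shows "\<exists>w e. x = (\<Sum>j<r. w j *s a j) + e \<and>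
     (\<Sum>j<r. cmod (w j)) + (norm e)^2 / (2*\<beta>) \<le> Lfun x (r, a, d) \<beta>"
proof -
  obtain y where y: "x = (\<Sum>j<r. (of_real (d j) * ip (a j) y) *s a j) + of_real \<beta> *s y"
    "Lfun x (r, a, d) \<beta> = (1/2) * (\<Sum>j<r. d j) +
        (1/2) * ((\<Sum>j<r. d j * (cmod (ip (a j) y))^2) + \<beta> * (norm y)^2)"
    using key[OF d b] by blast
  have 1: "cmod (of_real (d j) * ip (a j) y) \<le> (1/2) * d j + (1/2) * (d j * (cmod (ip (a j) y))^2)"
    if "j < r" for j
  proof -
    have dj: "d j > 0" using d that by auto
    define t where "t = cmod (ip (a j) y)"
    have "0 \<le> (t - 1)^2" by simp
    then have "2 * t \<le> 1 + t^2" by (simp add: power2_eq_square algebra_simps)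
    then have "d j * (2 * t) \<le> d j * (1 + t^2)" using dj by (intro mult_left_mono) auto
    then show ?thesis using dj by (simp add: norm_mult t_def[symmetric] algebra_simps)
  qed
  have 2: "(norm (of_real \<beta> *s y))^2 / (2*\<beta>) = (1/2) * (\<beta> * (norm y)^2)"
    using b by (simp add: ofreal_smult power2_eq_square)
  have "(\<Sum>j<r. cmod (of_real (d j) * ip (a j) y)) \<le> (\<Sum>j<r. (1/2) * d j + (1/2) * (d j * (cmod (ip (a j) y))^2))"
    by (rule sum_mono) (use 1 in auto)
  also have "\<dots> = (1/2) * (\<Sum>j<r. d j) + (1/2) * (\<Sum>j<r. d j * (cmod (ip (a j) y))^2)"
    by (simp add: sum.distrib sum_distrib_left)
  finally have 3: "(\<Sum>j<r. cmod (of_real (d j) * ip (a j) y)) \<le> (1/2) * (\<Sum>j<r. d j) + (1/2) * (\<Sum>j<r. d j * (cmod (ip (a j) y))^2)" .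
  have "(\<Sum>j<r. cmod (of_real (d j) * ip (a j) y)) + (norm (of_real \<beta> *s y))^2 / (2*\<beta>) \<le> Lfun x (r, a, d) \<beta>"
    apply (rule order_trans[OF add_mono[OF 3 order_eq_refl[OF 2]]])
    using y(2) by (simp add: algebra_simps)
  then show ?thesis using y(1)
    by (intro exI[of _ "\<lambda>j. of_real (d j) * ip (a j) y"] exI[of _ "of_real \<beta> *s y"]) simp
qed

lemma Lupper:
  fixes a :: "nat \<Rightarrow> complex^'n"
  assumes e: "\<epsilon> > 0" and b: "\<beta> > 0" and x: "x = (\<Sum>k<r. s k *s a k)"
  shows "Lfun x (r, a, \<lambda>k. cmod (s k) + \<epsilon>) \<beta> \<le> (\<Sum>k<r. cmod (s k)) + r * \<epsilon> / 2"
proof -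
  define d where "d = (\<lambda>k. cmod (s k) + \<epsilon>)"
  have d: "\<forall>j<r. d j > 0" using e by (simp add: d_def add_nonneg_pos)
  obtain y where y: "x = (\<Sum>j<r. (of_real (d j) * ip (a j) y) *s a j) + of_real \<beta> *s y"
    "Lfun x (r, a, d) \<beta> = (1/2) * (\<Sum>j<r. d j) +
        (1/2) * ((\<Sum>j<r. d j * (cmod (ip (a j) y))^2) + \<beta> * (norm y)^2)"
    using key[OF d b] by blast
  have "(\<Sum>j<r. d j * (cmod (ip (a j) y))^2) + \<beta> * (norm y)^2
     \<le> (\<Sum>j<r. (cmod (s j))^2 / d j) + (norm (0::complex^'n))^2 / \<beta>"
    by (rule F1[OF d b y(1)]) (simp add: x)
  also have "\<dots> \<le> (\<Sum>j<r. cmod (s j))"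
  proof -
    have "(cmod (s j))^2 / d j \<le> cmod (s j)" for j
    proof -
      have "(cmod (s j))^2 \<le> cmod (s j) * d j" using e
        by (simp add: d_def power2_eq_square algebra_simps)
      then show ?thesis using d e unfolding d_def
        by (simp add: divide_le_eq add_nonneg_pos)
    qed
    then show ?thesis by (simp add: sum_mono)
  qed
  finally have "(\<Sum>j<r. d j * (cmod (ip (a j) y))^2) + \<beta> * (norm y)^2 \<le> (\<Sum>j<r. cmod (s j))" .
  moreover have "(\<Sum>j<r. d j) = (\<Sum>j<r. cmod (s j)) + r * \<epsilon>"
    by (simp add: d_def sum.distrib)
  ultimately have "Lfun x (r, a, d) \<beta> \<le> (\<Sum>k<r. cmod (s k)) + r * \<epsilon> / 2"
    using y(2) by (simp add: field_simps)
  then show ?thesis by (simp add: d_def)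
qed

lemma an_le:
  fixes r :: nat
  assumes "r \<ge> 1" "\<forall>k<r. a k \<in> A" "x = (\<Sum>k<r. s k *s a k)"
  shows "atomic_norm A x \<le> ereal (\<Sum>k<r. cmod (s k))"
  unfolding atomic_norm_def
  by (rule INF_lower2[of "(r, s, a)"]) (use assms in auto)

lemma sum_split_nat: "(\<Sum>k<(r::nat)+m. f k) = (\<Sum>k<r. f k) + (\<Sum>k<m. f (r+k))"
  by (induction m) (auto simp: add_ac)

lemma an_concat:
  fixes A :: "(complex^'n) set" and r :: nat
  assumes "r \<ge> 1" "\<forall>k<r. a k \<in> A" "B \<subseteq> A" "finite B"
    "x = (\<Sum>k<r. w k *s a k) + (\<Sum>b\<in>B. g b *s b)"
  shows "atomic_norm A x \<le> ereal ((\<Sum>k<r. cmod (w k)) + (\<Sum>b\<in>B. cmod (g b)))"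
proof -
  obtain h where h: "bij_betw h {0..<card B} B" using ex_bij_betw_nat_finite[OF assms(4)] by blast
  define m where "m = card B"
  define s where "s = (\<lambda>k. if k < r then w k else g (h (k - r)))"
  define a' where "a' = (\<lambda>k. if k < r then a k else h (k - r))"
  have hB: "h k \<in> B" if "k < m" for k using h that unfolding m_def bij_betw_def by auto
  have 1: "(\<Sum>k<m. F (h k)) = (\<Sum>b\<in>B. F b)" for F :: "complex^'n \<Rightarrow> 'b::comm_monoid_add"
    using sum.reindex_bij_betw[OF h, of F] unfolding m_def by (simp add: lessThan_atLeast0)
  have "x = (\<Sum>k<r+m. s k *s a' k)"
    unfolding sum_split_nat using assms(5) 1[of "\<lambda>b. g b *s b"] by (simp add: s_def a'_def)
  moreover have "\<forall>k<r+m. a' k \<in> A"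
    using assms(2,3) hB by (auto simp: a'_def)
  ultimately have "atomic_norm A x \<le> ereal (\<Sum>k<r+m. cmod (s k))"
    using assms(1) by (intro an_le) auto
  also have "(\<Sum>k<r+m. cmod (s k)) = (\<Sum>k<r. cmod (w k)) + (\<Sum>b\<in>B. cmod (g b))"
    unfolding sum_split_nat using 1[of "\<lambda>b. cmod (g b)"] by (simp add: s_def)
  finally show ?thesis .
qed

lemma coords:
  fixes A :: "(complex^'n) set"
  obtains B C K where "B \<subseteq> A" "B \<subseteq> C" "finite C" "K \<ge> 0"
    "\<And>v. (\<Sum>c\<in>C. vec.representation C v c *s c) = v"
    "\<And>c a. c \<in> C - B \<Longrightarrow> a \<in> A \<Longrightarrow> vec.representation C a c = 0"
    "\<And>c v. c \<in> C \<Longrightarrow> cmod (vec.representation C v c) \<le> K * norm v"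
    "\<And>u v c. vec.representation C (u + v) c = vec.representation C u c + vec.representation C v c"
    "\<And>k v c. vec.representation C (k *s v) c = k * vec.representation C v c"
proof -
  obtain B where B: "B \<subseteq> A" "vec.independent B" "A \<subseteq> vec.span B"
    by (rule vec.maximal_independent_subset)
  define C where "C = vec.extend_basis B"
  have C: "B \<subseteq> C" "vec.independent C" "vec.span C = UNIV"
    unfolding C_def using vec.extend_basis_superset[OF B(2)] vec.independent_extend_basis[OF B(2)]
      vec.span_extend_basis[OF B(2)] by auto
  have fC: "finite C" using C(2) vec.finiteI_independent by blast
  let ?f = "vec.representation C"
  have add: "?f (u + v) c = ?f u c + ?f v c" for u v c
    using vec.representation_add[OF C(2)] C(3) by auto
  have scale: "?f (k *s v) c = k * ?f v c" for k v c
    using vec.representation_scale[OF C(2)] C(3) by auto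
  have sum: "?f (\<Sum>i\<in>I. g i) c = (\<Sum>i\<in>I. ?f (g i) c)" for I g c
    using vec.representation_sum[OF C(2), of I g] C(3) by auto
  have exp: "(\<Sum>c\<in>C. ?f v c *s c) = v" for v
    using vec.sum_representation_eq[OF C(2) _ fC] C(3) by auto
  have zero: "?f a c = 0" if "c \<in> C - B" "a \<in> A" for c a
  proof -
    have "?f a = vec.representation B a"
      using vec.representation_extend[OF C(2) _ C(1)] B(3) that(2) by auto
    then show ?thesis using vec.representation_ne_zero[of B a c] that(1) by auto
  qed
  define K where "K = (\<Sum>c\<in>C. \<Sum>i\<in>UNIV. cmod (?f (axis i 1) c))"
  have bound: "cmod (?f v c) \<le> K * norm v" if "c \<in> C" for c v
  proof -
    have "?f v c = ?f (\<Sum>i\<in>UNIV. (v$i) *s axis i 1) c" by (simp add: basis_expansion)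
    also have "\<dots> = (\<Sum>i\<in>UNIV. v$i * ?f (axis i 1) c)" by (simp add: sum scale)
    finally have "cmod (?f v c) \<le> (\<Sum>i\<in>UNIV. cmod (v$i) * cmod (?f (axis i 1) c))"
      by (metis (no_types, lifting) norm_mult norm_sum sum.cong)
    also have "\<dots> \<le> (\<Sum>i\<in>UNIV. norm v * cmod (?f (axis i 1) c))"
      by (intro sum_mono mult_right_mono) (auto intro: Finite_Cartesian_Product.norm_nth_le)
    also have "\<dots> = norm v * (\<Sum>i\<in>UNIV. cmod (?f (axis i 1) c))"
      by (simp add: sum_distrib_left)
    also have "\<dots> \<le> norm v * K"
      unfolding K_def
      by (intro mult_left_mono member_le_sum[where f="\<lambda>c. \<Sum>i\<in>UNIV. cmod (?f (axis i 1) c)"] that fC sum_nonneg) auto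
    finally show ?thesis by (simp add: mult.commute)
  qed
  have "K \<ge> 0" unfolding K_def by (intro sum_nonneg) auto
  show ?thesis
    by (rule that[OF B(1) C(1) fC \<open>K \<ge> 0\<close> exp zero bound add scale])
qed

lemma params_D:
  assumes "\<theta> \<in> params A"
  obtains r a d where "\<theta> = (r, a, d)" "r \<ge> 1" "\<forall>j<r. a j \<in> A" "\<forall>j<r. d j > 0"
  using assms unfolding params_def by auto

lemma lin: "h = (1/2)*q \<Longrightarrow> c1 < S + P \<Longrightarrow> 2*P \<le> q + R \<Longrightarrow> R < 2*c1-2*c2 \<Longrightarrow> S + h \<le> L \<Longrightarrow> c2 < (L::real)"
  by linarith

lemma LOWER:
  fixes A :: "(complex^'n) set" and c :: ereal
  assumes cN: "c < atomic_norm A x"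
  shows "\<exists>\<beta>0>0. \<forall>\<beta>. 0 < \<beta> \<and> \<beta> < \<beta>0 \<longrightarrow> (\<forall>\<theta>\<in>params A. c < ereal (Lfun x \<theta> \<beta>))"
proof -
  obtain B C K where B: "B \<subseteq> A" and BC: "B \<subseteq> C" and fC: "finite C" and K0: "K \<ge> 0"
    and exp: "\<And>v. (\<Sum>c\<in>C. vec.representation C v c *s c) = v"
    and zero: "\<And>c a. c \<in> C - B \<Longrightarrow> a \<in> A \<Longrightarrow> vec.representation C a c = 0"
    and bound: "\<And>c v. c \<in> C \<Longrightarrow> cmod (vec.representation C v c) \<le> K * norm v"
    and add: "\<And>u v c. vec.representation C (u + v) c = vec.representation C u c + vec.representation C v c"
    and scale: "\<And>k v c. vec.representation C (k *s v) c = k * vec.representation C v c"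
    by (rule coords[of A]) blast
  define f where "f = vec.representation C"
  have f0: "f 0 c = 0" for c using scale[of 0 0 c] unfolding f_def by simp
  have fsum: "f (\<Sum>j<r. w j *s a j) c = (\<Sum>j<r. w j * f (a j) c)" for r :: nat and w a c
    by (induction r) (auto simp: f0[unfolded f_def] add scale f_def)
  have fB: "finite B" using fC BC finite_subset by blast
  have dec: "\<exists>(r::nat) a w e. r \<ge> 1 \<and> (\<forall>j<r. a j \<in> A) \<and> x = (\<Sum>j<r. w j *s a j) + e \<and>
      (\<Sum>j<r. cmod (w j)) + (norm e)^2 / (2*\<beta>) \<le> Lfun x \<theta> \<beta> \<and>
      (\<forall>c\<in>C - B. f x c = f e c)"
    if th: "\<theta> \<in> params A" and b: "\<beta> > 0" for \<theta> \<beta>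
  proof -
    obtain r a d where rad: "\<theta> = (r, a, d)" "r \<ge> 1" "\<forall>j<r. a j \<in> A" "\<forall>j<r. d j > 0"
      using params_D[OF th] by blast
    obtain w e where we: "x = (\<Sum>j<r. w j *s a j) + e"
      "(\<Sum>j<r. cmod (w j)) + (norm e)^2 / (2*\<beta>) \<le> Lfun x (r, a, d) \<beta>"
      using Llower[OF rad(4) b, of x a] by blast
    have "f x c = f e c" if "c \<in> C - B" for c
    proof -
      have "f x c = (\<Sum>j<r. w j * f (a j) c) + f e c"
        by (subst we(1)) (simp add: f_def add fsum[unfolded f_def])
      also have "(\<Sum>j<r. w j * f (a j) c) = 0"
        using zero[OF that] rad(3) unfolding f_def by simp
      finally show ?thesis by simp
    qed
    then show ?thesis using rad we
      by (intro exI[of _ r] exI[of _ a] exI[of _ w] exI[of _ e]) auto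
  qed
  have "c \<noteq> \<infinity>" using cN by auto
  show ?thesis
  proof (cases "\<exists>c0\<in>C - B. f x c0 \<noteq> 0")
    case True
    then obtain c0 where c0: "c0 \<in> C - B" "f x c0 \<noteq> 0" by blast
    define \<gamma> where "\<gamma> = cmod (f x c0)"
    have g0: "\<gamma> > 0" using c0 by (simp add: \<gamma>_def)
    obtain c' where c': "c < ereal c'" using ereal_dense2[OF cN] by blast
    have Kpos: "K > 0"
    proof -
      have "\<gamma> \<le> K * norm x" unfolding \<gamma>_def f_def using bound c0 by blast
      then show ?thesis using g0 K0
        by (metis antisym_conv1 mult_zero_left not_le)
    qed
    define M where "M = \<bar>c'\<bar> + 1"
    define \<beta>0 where "\<beta>0 = (\<gamma>/K)^2 / (2*M)"
    have M: "M > 0" "c' < M" by (auto simp: M_def)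
    have b0: "\<beta>0 > 0" using g0 Kpos M by (simp add: \<beta>0_def)
    show ?thesis
    proof (intro exI[of _ \<beta>0] conjI b0 allI impI ballI)
      fix \<beta> \<theta> assume b: "0 < \<beta> \<and> \<beta> < \<beta>0" and th: "\<theta> \<in> params A"
      obtain r :: nat and a w e where rw: "r \<ge> 1" "\<forall>j<r. a j \<in> A" "x = (\<Sum>j<r. w j *s a j) + e"
        "(\<Sum>j<r. cmod (w j)) + (norm e)^2 / (2*\<beta>) \<le> Lfun x \<theta> \<beta>" "\<forall>c\<in>C - B. f x c = f e c"
        using dec[OF th] b by blast
      have "\<gamma> \<le> K * norm e" using rw(5) c0 bound[of c0 e] unfolding \<gamma>_def f_def by auto
      then have ge: "\<gamma>/K \<le> norm e" using Kpos by (simp add: divide_le_eq mult.commute)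
      have "c' < M" by (rule M)
      also have "M = (\<gamma>/K)^2 / (2*\<beta>0)" using M g0 Kpos by (simp add: \<beta>0_def)
      also have "\<dots> < (\<gamma>/K)^2 / (2*\<beta>)"
        using b g0 Kpos by (intro divide_strict_left_mono) auto
      also have "\<dots> \<le> (norm e)^2 / (2*\<beta>)"
        using ge g0 Kpos b by (intro divide_right_mono power_mono) auto
      also have "\<dots> \<le> Lfun x \<theta> \<beta>"
        using rw(4) sum_nonneg[of "{..<r}" "\<lambda>j. cmod (w j)"] by auto
      finally show "c < ereal (Lfun x \<theta> \<beta>)" using c' by (metis ereal_less_eq(3) less_imp_le order_less_le_trans)
    qed
  next
    case False
    then have fx0: "\<forall>c\<in>C - B. f x c = 0" by blast
    obtain c1 where c1: "c < ereal c1" "ereal c1 < atomic_norm A x" using ereal_dense2[OF cN] by blast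
    obtain c2 where c2: "c < ereal c2" "ereal c2 < ereal c1" using ereal_dense2[OF c1(1)] by blast
    have c21: "c2 < c1" using c2 by simp
    define K' where "K' = real (card B) * K"
    have K'0: "K' \<ge> 0" using K0 by (simp add: K'_def)
    define \<beta>0 where "\<beta>0 = 2 * (c1 - c2) / (K'^2 + 1)"
    have b0: "\<beta>0 > 0" using c21 by (simp add: \<beta>0_def add_nonneg_pos)
    show ?thesis
    proof (intro exI[of _ \<beta>0] conjI b0 allI impI ballI)
      fix \<beta> \<theta> assume b: "0 < \<beta> \<and> \<beta> < \<beta>0" and th: "\<theta> \<in> params A"
      obtain r :: nat and a w e where rw: "r \<ge> 1" "\<forall>j<r. a j \<in> A" "x = (\<Sum>j<r. w j *s a j) + e"
        "(\<Sum>j<r. cmod (w j)) + (norm e)^2 / (2*\<beta>) \<le> Lfun x \<theta> \<beta>" "\<forall>c\<in>C - B. f x c = f e c"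
        using dec[OF th] b by blast
      have "e = (\<Sum>c\<in>C. f e c *s c)" using exp unfolding f_def by simp
      also have "\<dots> = (\<Sum>c\<in>B. f e c *s c)"
        using fx0 rw(5) by (intro sum.mono_neutral_right fC BC) auto
      finally have eB: "e = (\<Sum>b\<in>B. f e b *s b)" .
      have "atomic_norm A x \<le> ereal ((\<Sum>j<r. cmod (w j)) + (\<Sum>b\<in>B. cmod (f e b)))"
        using an_concat[OF rw(1) rw(2) B fB, of x w "\<lambda>b. f e b"] rw(3) eB by simp
      moreover have "(\<Sum>b\<in>B. cmod (f e b)) \<le> K' * norm e"
      proof -
        have "(\<Sum>b\<in>B. cmod (f e b)) \<le> real (card B) * (K * norm e)"
          using bound BC unfolding f_def by (intro sum_bounded_above) auto
        then show ?thesis by (simp add: K'_def)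
      qed
      ultimately have "ereal c1 < ereal ((\<Sum>j<r. cmod (w j)) + K' * norm e)"
        using c1(2) by (meson ereal_less_eq(3) add_left_mono order_less_le_trans)
      then have 1: "c1 < (\<Sum>j<r. cmod (w j)) + K' * norm e" by simp
      have 2: "2 * (K' * norm e) \<le> (norm e)^2 / \<beta> + \<beta> * K'^2"
        using amgm[of \<beta> "norm e" K'] b by (simp add: mult_ac)
      have 3: "\<beta> * K'^2 < 2 * c1 - 2 * c2"
      proof -
        have "\<beta> * K'^2 \<le> \<beta> * (K'^2 + 1)" using b by simp
        also have "\<dots> < \<beta>0 * (K'^2 + 1)" using b by (intro mult_strict_right_mono) (auto simp: add_nonneg_pos)
        also have "\<dots> = 2 * c1 - 2 * c2"
        proof -
          have "K'^2 + 1 > 0" by (simp add: add_nonneg_pos)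
          then show ?thesis by (simp add: \<beta>0_def)
        qed
        finally show ?thesis .
      qed
      have "(norm e)^2 / (2*\<beta>) = (1/2) * ((norm e)^2 / \<beta>)" by simp
      then have "c2 < Lfun x \<theta> \<beta>" using 1 2 3 rw(4) by (rule lin)
      then show "c < ereal (Lfun x \<theta> \<beta>)" using c2(1) by (meson ereal_less_eq(3) less_imp_le order_less_le_trans)
    qed
  qed
qed

theorem theorem3:
  fixes A :: "(complex^'n) set" and x :: "complex^'n"
  assumes indep: "\<forall>S. S \<subseteq> A \<and> finite S \<and> card S \<le> CARD('n) \<longrightarrow> vec.independent S"
  shows "(\<exists>lim0 :: nat \<times> (nat \<Rightarrow> complex^'n) \<times> (nat \<Rightarrow> real) \<Rightarrow> ereal.
            (\<forall>\<theta>\<in>params A. ((\<lambda>\<beta>. ereal (Lfun x \<theta> \<beta>)) \<longlongrightarrow> lim0 \<theta>) (at_right 0)) \<and>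
            atomic_norm A x = (INF \<theta>\<in>params A. lim0 \<theta>))
       \<and> ((\<lambda>\<beta>. INF \<theta>\<in>params A. ereal (Lfun x \<theta> \<beta>)) \<longlongrightarrow> atomic_norm A x) (at_right 0)"
proof -
  define lim0 where "lim0 = (\<lambda>\<theta>. SUP \<beta>\<in>{0<..}. ereal (Lfun x \<theta> \<beta>))"
  have upper_lim: "ereal (Lfun x \<theta> \<beta>) \<le> lim0 \<theta>" if "\<beta> > 0" for \<theta> \<beta>
    unfolding lim0_def using that by (intro SUP_upper) auto
  have mono: "Lfun x \<theta> \<beta>2 \<le> Lfun x \<theta> \<beta>1" if hh: "\<theta> \<in> params A" "0 < \<beta>1" "\<beta>1 \<le> \<beta>2" for \<theta> \<beta>1 \<beta>2
  proof -
    obtain r a d where "\<theta> = (r, a, d)" "\<forall>j<r. d j > 0"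
      using params_D[OF hh(1)] by (metis (no_types))
    then show ?thesis using Lmono[of r d \<beta>1 \<beta>2 x a] hh by simp
  qed
  have T1: "((\<lambda>\<beta>. ereal (Lfun x \<theta> \<beta>)) \<longlongrightarrow> lim0 \<theta>) (at_right 0)" if th: "\<theta> \<in> params A" for \<theta>
  proof (rule increasing_tendsto)
    show "\<forall>\<^sub>F \<beta> in at_right 0. ereal (Lfun x \<theta> \<beta>) \<le> lim0 \<theta>"
      unfolding eventually_at_right_field using upper_lim by (intro exI[of _ 1]) auto
    fix y assume "y < lim0 \<theta>"
    then obtain \<beta>1 where b1: "\<beta>1 > 0" "y < ereal (Lfun x \<theta> \<beta>1)"
      unfolding lim0_def less_SUP_iff by auto
    show "\<forall>\<^sub>F \<beta> in at_right 0. y < ereal (Lfun x \<theta> \<beta>)"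
      unfolding eventually_at_right_field
    proof (intro exI[of _ \<beta>1] conjI allI impI)
      fix \<beta> :: real assume "0 < \<beta>" "\<beta> < \<beta>1"
      then have "Lfun x \<theta> \<beta>1 \<le> Lfun x \<theta> \<beta>" using mono[OF th] by simp
      then show "y < ereal (Lfun x \<theta> \<beta>)" using b1(2) by (meson ereal_less_eq(3) order_less_le_trans)
    qed (use b1 in auto)
  qed
  have T2: "atomic_norm A x \<le> lim0 \<theta>" if th: "\<theta> \<in> params A" for \<theta>
  proof (rule dense_le)
    fix c assume "c < atomic_norm A x"
    then obtain \<beta>0 where b0: "\<beta>0 > 0" "\<forall>\<beta>. 0 < \<beta> \<and> \<beta> < \<beta>0 \<longrightarrow> (\<forall>\<theta>\<in>params A. c < ereal (Lfun x \<theta> \<beta>))"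
      using LOWER by blast
    then have "c < ereal (Lfun x \<theta> (\<beta>0/2))" using th by auto
    also have "\<dots> \<le> lim0 \<theta>" using b0 by (intro upper_lim) auto
    finally show "c \<le> lim0 \<theta>" by simp
  qed
  have T3: "(INF \<theta>\<in>params A. lim0 \<theta>) \<le> atomic_norm A x"
    unfolding atomic_norm_def
  proof (rule INF_greatest)
    fix p assume "p \<in> {(r::nat, s::nat\<Rightarrow>complex, a::nat\<Rightarrow>complex^'n). r \<ge> 1 \<and> (\<forall>k<r. a k \<in> A) \<and>
                  x = (\<Sum>k<r. s k *s a k)}"
    then obtain r s a where p: "p = (r, s, a)" "r \<ge> 1" "\<forall>k<r. a k \<in> A" "x = (\<Sum>k<r. s k *s a k)"
      by auto
    show "(INF \<theta>\<in>params A. lim0 \<theta>) \<le> ereal (\<Sum>k<fst p. cmod (fst (snd p) k))"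
    proof (rule ereal_le_epsilon2)
      fix e :: real assume e: "e > 0"
      define \<epsilon> where "\<epsilon> = 2 * e / r"
      have eps: "\<epsilon> > 0" using e p(2) by (simp add: \<epsilon>_def)
      have th: "(r, a, \<lambda>k. cmod (s k) + \<epsilon>) \<in> params A"
        using p eps by (simp add: params_def add_nonneg_pos)
      have "(INF \<theta>\<in>params A. lim0 \<theta>) \<le> lim0 (r, a, \<lambda>k. cmod (s k) + \<epsilon>)"
        by (rule INF_lower[OF th])
      also have "\<dots> \<le> ereal ((\<Sum>k<r. cmod (s k)) + r * \<epsilon> / 2)"
        unfolding lim0_def
        by (rule SUP_least) (use Lupper[OF eps _ p(4)] in auto)
      also have "r * \<epsilon> / 2 = e" using p(2) by (simp add: \<epsilon>_def)
      finally show "(INF \<theta>\<in>params A. lim0 \<theta>) \<le> ereal (\<Sum>k<fst p. cmod (fst (snd p) k)) + ereal e"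
        using p(1) by simp
    qed
  qed
  have eq: "atomic_norm A x = (INF \<theta>\<in>params A. lim0 \<theta>)"
    using T3 T2 by (intro antisym INF_greatest) auto
  have T4: "((\<lambda>\<beta>. INF \<theta>\<in>params A. ereal (Lfun x \<theta> \<beta>)) \<longlongrightarrow> atomic_norm A x) (at_right 0)"
  proof (rule increasing_tendsto)
    show "\<forall>\<^sub>F \<beta> in at_right 0. (INF \<theta>\<in>params A. ereal (Lfun x \<theta> \<beta>)) \<le> atomic_norm A x"
      unfolding eventually_at_right_field
    proof (intro exI[of _ "1::real"] conjI allI impI)
      fix \<beta> :: real assume b: "0 < \<beta>" "\<beta> < 1"
      show "(INF \<theta>\<in>params A. ereal (Lfun x \<theta> \<beta>)) \<le> atomic_norm A x" unfolding eq
        by (rule INF_mono) (use upper_lim b in blast)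
    qed simp
    fix y assume "y < atomic_norm A x"
    then obtain z where z: "y < z" "z < atomic_norm A x" using dense by blast
    then obtain \<beta>0 where b0: "\<beta>0 > 0" "\<forall>\<beta>. 0 < \<beta> \<and> \<beta> < \<beta>0 \<longrightarrow> (\<forall>\<theta>\<in>params A. z < ereal (Lfun x \<theta> \<beta>))"
      using LOWER by blast
    show "\<forall>\<^sub>F \<beta> in at_right 0. y < (INF \<theta>\<in>params A. ereal (Lfun x \<theta> \<beta>))"
      unfolding eventually_at_right_field
    proof (intro exI[of _ \<beta>0] conjI allI impI)
      fix \<beta> :: real assume "0 < \<beta>" "\<beta> < \<beta>0"
      then have "z \<le> (INF \<theta>\<in>params A. ereal (Lfun x \<theta> \<beta>))"
        using b0 by (intro INF_greatest) (auto intro: less_imp_le)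
      then show "y < (INF \<theta>\<in>params A. ereal (Lfun x \<theta> \<beta>))" using z(1) by simp
    qed (use b0 in auto)
  qed
  show ?thesis using T1 eq T4 by blast
qed

end
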